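(* Let $F$, $X_0$, $B$, $C$ be as in the context. Suppose $\dim\ker C=1$, let $T\subset\mathbb{R}^m$ be a linear subspace of codimension 1 with $T\cap\ker C=\{0\}$, and suppose $F(X)=0$ has a nonconstant analytic family of solutions $X(t)=\sum_{p=0}^\infty X_pt^p$ with initial term $X_0$. Then $F(X)=0$ admits a $T$-standard formal solution $Y(t)=\sum_{p=0}^\infty Y_pt^p$ with $Y_0=X_0$.
   Context: Let $m,n\ge 1$ and let $F=(F_1,\dots,F_n):\mathbb{R}^m\to\mathbb{R}^n$, where each component is a polynomial of degree at most 2 written as $F_k(X)=\sum_{i=1}^m\sum_{j=1}^m\alpha^k_{ij}x_ix_j+\sum_{i=1}^m\beta^k_ix_i+\gamma^k$ for $X=(x_1,\dots,x_m)$, with real coefficients and $\alpha^k_{ij}=\alpha^k_{ji}$. Fix $X_0\in\mathbb{R}^m$ with $F(X_0)=0$. Define the bilinear map $B:\mathbb{R}^m\times\mathbb{R}^m\to\mathbb{R}^n$ by $B(X,Y)_k=\sum_{i,j=1}^m\alpha^k_{ij}x_iy_j$, the linear map $A:\mathbb{R}^m\to\mathbb{R}^n$ by $(AX)_k=\sum_{i=1}^m\beta^k_ix_i$, and the linear map $C:\mathbb{R}^m\to\mathbb{R}^n$ by $CX=B(X_0,X)+B(X,X_0)+AX$. An analytic family of solutions with initial term $X_0$ is a power series $X(t)=\sum_{p=0}^\infty X_pt^p$ with $X_p\in\mathbb{R}^m$, positive radius of convergence, constant term equal to $X_0$, and $F(X(t))=0$ for all sufficiently small $t$; it is nonconstant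 if $X_p\neq 0$ for some $p\ge 1$. Given a codimension-1 subspace $T$ with $T\cap\ker C=\{0\}$, a $T$-standard formal solution to $F(X)=0$ is a formal power series $Y(t)=\sum_{p=0}^\infty Y_pt^p$ with $Y_p\in\mathbb{R}^m$ (no convergence required) such that: (1) $CY_q=-\sum_{p=1}^{q-1}B(Y_p,Y_{q-p})$ for every $q\ge 1$; (2) $Y_1\neq 0$; (3) $Y_p\in T$ for every $p\ge 2$. *)

theory Defs
  imports "HOL-Analysis.Analysis"
begin

definition quadF :: "('n \<Rightarrow> 'm::finite \<Rightarrow> 'm \<Rightarrow> real) \<Rightarrow> ('n \<Rightarrow> 'm \<Rightarrow> real) \<Rightarrow> ('n::finite \<Rightarrow> real)
    \<Rightarrow> real^'m \<Rightarrow> real^'n" where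
  "quadF \<alpha> \<beta> \<gamma> X = (\<chi> k. (\<Sum>i\<in>UNIV. \<Sum>j\<in>UNIV. \<alpha> k i j * X$i * X$j)
                         + (\<Sum>i\<in>UNIV. \<beta> k i * X$i) + \<gamma> k)"

definition bilinB :: "('n::finite \<Rightarrow> 'm::finite \<Rightarrow> 'm \<Rightarrow> real) \<Rightarrow> real^'m \<Rightarrow> real^'m \<Rightarrow> real^'n" where
  "bilinB \<alpha> X Y = (\<chi> k. \<Sum>i\<in>UNIV. \<Sum>j\<in>UNIV. \<alpha> k i j * X$i * Y$j)"

definition linA :: "('n::finite \<Rightarrow> 'm::finite \<Rightarrow> real) \<Rightarrow> real^'m \<Rightarrow> real^'n" where
  "linA \<beta> X = (\<chi> k. \<Sum>i\<in>UNIV. \<beta> k i * X$i)"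

definition linC :: "('n::finite \<Rightarrow> 'm::finite \<Rightarrow> 'm \<Rightarrow> real) \<Rightarrow> ('n \<Rightarrow> 'm \<Rightarrow> real) \<Rightarrow> real^'m
    \<Rightarrow> real^'m \<Rightarrow> real^'n" where
  "linC \<alpha> \<beta> X0 X = bilinB \<alpha> X0 X + bilinB \<alpha> X X0 + linA \<beta> X"

definition analytic_family ::
    "('n::finite \<Rightarrow> 'm::finite \<Rightarrow> 'm \<Rightarrow> real) \<Rightarrow> ('n \<Rightarrow> 'm \<Rightarrow> real) \<Rightarrow> ('n \<Rightarrow> real)
     \<Rightarrow> real^'m \<Rightarrow> (nat \<Rightarrow> real^'m) \<Rightarrow> bool" where
  "analytic_family \<alpha> \<beta> \<gamma> X0 Xs \<longleftrightarrow>
     conv_radius Xs > 0 \<and> Xs 0 = X0 \<and>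
     (\<exists>\<epsilon>>0. \<forall>t::real. \<bar>t\<bar> < \<epsilon> \<longrightarrow> quadF \<alpha> \<beta> \<gamma> (\<Sum>p. t ^ p *\<^sub>R Xs p) = 0)"

definition nonconstant_series :: "(nat \<Rightarrow> real^'m::finite) \<Rightarrow> bool" where
  "nonconstant_series Xs \<longleftrightarrow> (\<exists>p\<ge>1. Xs p \<noteq> 0)"

definition T_standard_formal_solution ::
    "('n::finite \<Rightarrow> 'm::finite \<Rightarrow> 'm \<Rightarrow> real) \<Rightarrow> ('n \<Rightarrow> 'm \<Rightarrow> real) \<Rightarrow> real^'m
     \<Rightarrow> (real^'m) set \<Rightarrow> (nat \<Rightarrow> real^'m) \<Rightarrow> bool" where
  "T_standard_formal_solution \<alpha> \<beta> X0 T Ys \<longleftrightarrow>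
     (\<forall>q\<ge>1. linC \<alpha> \<beta> X0 (Ys q) = - (\<Sum>p=1..q-1. bilinB \<alpha> (Ys p) (Ys (q - p)))) \<and>
     Ys 1 \<noteq> 0 \<and>
     (\<forall>p\<ge>2. Ys p \<in> T)"

end

theory Submission
  imports Defs "HOL-Analysis.FPS_Convergence"
begin


definition cm :: "('n::finite \<Rightarrow> 'm::finite \<Rightarrow> 'm \<Rightarrow> real) \<Rightarrow> ('n \<Rightarrow> 'm \<Rightarrow> real) \<Rightarrow> real^'m \<Rightarrow> 'n \<Rightarrow> 'm \<Rightarrow> real" where
  "cm \<alpha> \<beta> X0 k i = (\<Sum>j\<in>UNIV. \<alpha> k j i * X0$j) + (\<Sum>j\<in>UNIV. \<alpha> k i j * X0$j) + \<beta> k i"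

lemma linC_expand: "linC \<alpha> \<beta> X0 X $ k = (\<Sum>i\<in>UNIV. cm \<alpha> \<beta> X0 k i * X$i)"
proof -
  have 1: "(\<Sum>i\<in>UNIV. \<Sum>j\<in>UNIV. \<alpha> k i j * X0$i * X$j) = (\<Sum>i\<in>UNIV. (\<Sum>j\<in>UNIV. \<alpha> k j i * X0$j) * X$i)"
    by (subst sum.swap) (simp add: sum_distrib_right)
  have 2: "(\<Sum>i\<in>UNIV. \<Sum>j\<in>UNIV. \<alpha> k i j * X$i * X0$j) = (\<Sum>i\<in>UNIV. (\<Sum>j\<in>UNIV. \<alpha> k i j * X0$j) * X$i)"
    by (simp add: sum_distrib_left sum_distrib_right mult_ac)
  show ?thesis
    unfolding linC_def bilinB_def linA_def cm_def
    by (simp add: 1 2 distrib_right sum.distrib)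
qed

lemma linC_add: "linC \<alpha> \<beta> X0 (X + Y) = linC \<alpha> \<beta> X0 X + linC \<alpha> \<beta> X0 Y"
  by (simp add: vec_eq_iff linC_expand distrib_left sum.distrib)

lemma linC_scale: "linC \<alpha> \<beta> X0 (c *\<^sub>R X) = c *\<^sub>R linC \<alpha> \<beta> X0 X"
  by (simp add: vec_eq_iff linC_expand sum_distrib_left mult_ac)

lemma linear_linC: "linear (linC \<alpha> \<beta> X0)"
  by (rule linearI) (simp_all add: linC_add linC_scale)

lemma bilinB_0[simp]: "bilinB \<alpha> 0 X = 0" "bilinB \<alpha> X 0 = 0"
  by (simp_all add: bilinB_def vec_eq_iff)

definition Cf :: "('n \<Rightarrow> 'm::finite \<Rightarrow> real) \<Rightarrow> ('m \<Rightarrow> real fps) \<Rightarrow> 'n \<Rightarrow> real fps" where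
  "Cf c U k = (\<Sum>i\<in>UNIV. fps_const (c k i) * U i)"
definition Bf :: "('n \<Rightarrow> 'm::finite \<Rightarrow> 'm \<Rightarrow> real) \<Rightarrow> ('m \<Rightarrow> real fps) \<Rightarrow> ('m \<Rightarrow> real fps) \<Rightarrow> 'n \<Rightarrow> real fps" where
  "Bf \<alpha> U V k = (\<Sum>i\<in>UNIV. \<Sum>j\<in>UNIV. fps_const (\<alpha> k i j) * U i * V j)"
definition cfv :: "('m::finite \<Rightarrow> real fps) \<Rightarrow> nat \<Rightarrow> real^'m" where
  "cfv U n = (\<chi> i. fps_nth (U i) n)"
definition vb :: "('a \<Rightarrow> real fps) \<Rightarrow> nat \<Rightarrow> bool" where
  "vb U N \<longleftrightarrow> (\<forall>i. \<forall>n<N. fps_nth (U i) n = 0)"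

lemma Cf_nth: "fps_nth (Cf (cm \<alpha> \<beta> X0) U k) n = linC \<alpha> \<beta> X0 (cfv U n) $ k"
  by (simp add: Cf_def linC_expand cfv_def fps_sum_nth)

lemma Bf_nth: "fps_nth (Bf \<alpha> U V k) n = (\<Sum>l=0..n. bilinB \<alpha> (cfv U l) (cfv V (n-l)) $ k)"
proof -
  have "fps_nth (Bf \<alpha> U V k) n = (\<Sum>i\<in>UNIV. \<Sum>j\<in>UNIV. \<Sum>l=0..n. \<alpha> k i j * fps_nth (U i) l * fps_nth (V j) (n-l))"
    by (simp only: Bf_def fps_sum_nth mult.assoc fps_mult_left_const_nth)
       (simp add: fps_mult_nth sum_distrib_left)
  also have "\<dots> = (\<Sum>i\<in>UNIV. \<Sum>l=0..n. \<Sum>j\<in>UNIV. \<alpha> k i j * fps_nth (U i) l * fps_nth (V j) (n-l))"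
    by (rule sum.cong[OF refl], rule sum.swap)
  also have "\<dots> = (\<Sum>l=0..n. \<Sum>i\<in>UNIV. \<Sum>j\<in>UNIV. \<alpha> k i j * fps_nth (U i) l * fps_nth (V j) (n-l))"
    by (rule sum.swap)
  finally show ?thesis by (simp add: bilinB_def cfv_def)
qed

lemma Cf_add: "Cf c (\<lambda>i. U i + V i) k = Cf c U k + Cf c V k"
  by (simp add: Cf_def distrib_left sum.distrib)

lemma Bf_add: "Bf \<alpha> (\<lambda>i. U i + V i) (\<lambda>i. U i + V i) k =
   Bf \<alpha> U U k + Bf \<alpha> U V k + Bf \<alpha> V U k + Bf \<alpha> V V k"
  by (simp add: Bf_def distrib_left distrib_right sum.distrib algebra_simps)

lemma Bf_zero[simp]: "Bf \<alpha> (\<lambda>i. 0) V k = 0" "Bf \<alpha> V (\<lambda>i. 0) k = 0"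
  by (simp_all add: Bf_def)

lemma vb_Bf:
  assumes "vb U a" "vb V b"
  shows "vb (Bf \<alpha> U V) (a+b)"
  unfolding vb_def
proof (intro allI impI)
  fix k n assume n: "n < a + b"
  have h: "(\<Sum>l=0..n. fps_nth (U i) l * fps_nth (V j) (n-l)) = 0" for i j
  proof (rule sum.neutral, rule ballI)
    fix l assume "l \<in> {0..n}"
    then have "l < a \<or> n - l < b" using n by auto
    then show "fps_nth (U i) l * fps_nth (V j) (n-l) = 0" using assms unfolding vb_def by auto
  qed
  show "fps_nth (Bf \<alpha> U V k) n = 0"
    by (simp only: Bf_def fps_sum_nth mult.assoc fps_mult_left_const_nth)
       (simp add: fps_mult_nth h)
qed

lemma vb_cfv: "vb U N \<Longrightarrow> n < N \<Longrightarrow> cfv U n = 0"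
  by (simp add: vb_def cfv_def vec_eq_iff)

lemma order_lemma:
  fixes \<alpha> :: "'n::finite \<Rightarrow> 'm::finite \<Rightarrow> 'm \<Rightarrow> real"
  assumes Tker: "T \<inter> {X. linC \<alpha> \<beta> X0 X = 0} = {0}"
    and eq: "\<And>k. Cf (cm \<alpha> \<beta> X0) E k + Bf \<alpha> G E k + Bf \<alpha> E G k + Bf \<alpha> E E k + \<Psi> k = 0"
    and G1: "vb G 1" and E1: "vb E 1" and PsiN: "vb \<Psi> N"
    and ET: "\<And>n. cfv E n \<in> T"
  shows "vb E N"
proof -
  have "\<forall>n. n < N \<longrightarrow> cfv E n = 0"
  proof (intro allI)
    fix n show "n < N \<longrightarrow> cfv E n = 0"
    proof (induction n rule: less_induct)
      case (less n)
      show ?case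
      proof
        assume nN: "n < N"
        show "cfv E n = 0"
        proof (cases "n = 0")
          case True then show ?thesis using E1 vb_cfv by auto
        next
          case False
          have En: "vb E n" using less nN unfolding vb_def cfv_def vec_eq_iff
            by (metis order.strict_trans vec_lambda_beta zero_index)
          have a: "vb (Bf \<alpha> G E) (1+n)" by (rule vb_Bf[OF G1 En])
          have b: "vb (Bf \<alpha> E G) (n+1)" by (rule vb_Bf[OF En G1])
          have c: "vb (Bf \<alpha> E E) (n+n)" by (rule vb_Bf[OF En En])
          have "linC \<alpha> \<beta> X0 (cfv E n) $ k = 0" for k
          proof -
            have "fps_nth (Cf (cm \<alpha> \<beta> X0) E k + Bf \<alpha> G E k + Bf \<alpha> E G k + Bf \<alpha> E E k + \<Psi> k) n = 0"
              using eq by simp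
            moreover have "fps_nth (Bf \<alpha> G E k) n = 0" using a by (simp add: vb_def)
            moreover have "fps_nth (Bf \<alpha> E G k) n = 0" using b by (simp add: vb_def)
            moreover have "fps_nth (Bf \<alpha> E E k) n = 0" using c False by (simp add: vb_def)
            moreover have "fps_nth (\<Psi> k) n = 0" using PsiN nN by (simp add: vb_def)
            ultimately show ?thesis by (simp add: Cf_nth)
          qed
          then have "linC \<alpha> \<beta> X0 (cfv E n) = 0" by (simp add: vec_eq_iff)
          then show ?thesis using Tker ET[of n] by blast
        qed
      qed
    qed
  qed
  then show ?thesis unfolding vb_def cfv_def vec_eq_iff by auto
qed



lemma quadF_shift:
  "quadF \<alpha> \<beta> \<gamma> (X0 + D) $ k = quadF \<alpha> \<beta> \<gamma> X0 $ k + linC \<alpha> \<beta> X0 D $ k + bilinB \<alpha> D D $ k"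
  unfolding quadF_def linC_def bilinB_def linA_def
  by (simp add: algebra_simps sum.distrib)

lemma fps_zero_near0:
  fixes F :: "real fps"
  assumes r: "fps_conv_radius F > 0" and ev: "eventually (\<lambda>t. eval_fps F t = 0) (nhds 0)"
  shows "F = 0"
proof (rule ccontr)
  assume F: "F \<noteq> 0"
  define d where "d = subdegree F"
  define G where "G = fps_shift d F"
  have G0: "fps_nth G 0 \<noteq> 0" using F by (simp add: G_def d_def)
  have rG: "fps_conv_radius G = fps_conv_radius F" by (simp add: G_def)
  have "continuous (at 0) (eval_fps G)" by (rule continuous_eval_fps) (use r rG in \<open>auto simp: zero_ereal_def\<close>)
  hence "((eval_fps G) \<longlongrightarrow> eval_fps G 0) (at 0)" by (simp add: continuous_def)
  hence e1: "eventually (\<lambda>t. eval_fps G t \<noteq> 0) (at 0)"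
    using G0 by (intro tendsto_imp_eventually_ne) (auto simp: eval_fps_at_0)
  have "eventually (\<lambda>z. z \<in> eball 0 (fps_conv_radius F)) (nhds (0::real))"
    using r by (intro eventually_nhds_in_open) (auto simp: zero_ereal_def)
  hence e2: "eventually (\<lambda>z. z \<in> eball 0 (fps_conv_radius F)) (at (0::real))"
    by (simp add: eventually_at_filter eventually_mono)
  have e3: "eventually (\<lambda>t. eval_fps F t = 0) (at 0)"
    using ev by (simp add: eventually_at_filter eventually_mono)
  have e4: "eventually (\<lambda>t::real. t \<noteq> 0) (at 0)"
    by (simp add: eventually_at_filter)
  have "eventually (\<lambda>t. eval_fps G t \<noteq> 0 \<and> t \<in> eball 0 (fps_conv_radius F) \<and> eval_fps F t = 0 \<and> t \<noteq> 0) (at (0::real))"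
    using eventually_conj[OF e1 eventually_conj[OF e2 eventually_conj[OF e3 e4]]] by simp
  then obtain t :: real where t: "eval_fps G t \<noteq> 0" "t \<in> eball 0 (fps_conv_radius F)" "eval_fps F t = 0" "t \<noteq> 0"
    using eventually_happens trivial_limit_at by blast
  have "eval_fps G t = eval_fps F t / t ^ d"
    unfolding G_def using t by (subst eval_fps_shift) (auto simp: d_def)
  with t show False by simp
qed


lemma analytic_to_formal:
  fixes \<alpha> :: "'n::finite \<Rightarrow> 'm::finite \<Rightarrow> 'm \<Rightarrow> real"
  assumes root: "quadF \<alpha> \<beta> \<gamma> X0 = 0"
    and fam: "analytic_family \<alpha> \<beta> \<gamma> X0 Xs"
  shows "Cf (cm \<alpha> \<beta> X0) (\<lambda>i. Abs_fps (\<lambda>n. if n = 0 then 0 else Xs n $ i)) k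
       + Bf \<alpha> (\<lambda>i. Abs_fps (\<lambda>n. if n = 0 then 0 else Xs n $ i)) (\<lambda>i. Abs_fps (\<lambda>n. if n = 0 then 0 else Xs n $ i)) k = 0"
    (is "?F = 0")
proof -
  define Z where "Z = (\<lambda>i. Abs_fps (\<lambda>n. if n = 0 then 0 else Xs n $ i))"
  define Xt where "Xt = (\<lambda>t::real. \<Sum>p. t ^ p *\<^sub>R Xs p)"
  from fam obtain \<epsilon> where R: "conv_radius Xs > 0" and X00: "Xs 0 = X0" and eps: "\<epsilon> > 0"
    and zero: "\<And>t. \<bar>t\<bar> < \<epsilon> \<Longrightarrow> quadF \<alpha> \<beta> \<gamma> (Xt t) = 0"
    unfolding analytic_family_def Xt_def by blast
  have cr: "conv_radius (\<lambda>n. norm (Xs n)) = conv_radius Xs"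
    by (rule conv_radius_cong) simp
  have sn: "summable (\<lambda>n. norm (Xs n) * r ^ n)" if "ereal \<bar>r\<bar> < conv_radius Xs" for r :: real
  proof -
    have "summable (\<lambda>n. norm (norm (Xs n) * \<bar>r\<bar> ^ n))"
      by (rule abs_summable_in_conv_radius) (use that cr in simp)
    then have "summable (\<lambda>n. norm (Xs n) * \<bar>r\<bar> ^ n)" by (simp add: abs_mult power_abs)
    then show ?thesis
      by (rule summable_comparison_test[rotated]) (auto simp: abs_mult power_abs)
  qed
  have sv: "summable (\<lambda>n. t ^ n *\<^sub>R Xs n)" if "ereal \<bar>t\<bar> < conv_radius Xs" for t :: real
  proof (rule summable_comparison_test[rotated])
    show "summable (\<lambda>n. norm (Xs n) * \<bar>t\<bar> ^ n)" using sn[of "\<bar>t\<bar>"] that by simp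
  qed (auto simp: power_abs mult.commute)
  define Zf where "Zf = (\<lambda>i. Abs_fps (\<lambda>n. Xs n $ i))"
  have Zf_rad: "fps_conv_radius (Zf i) \<ge> conv_radius Xs" for i
    unfolding fps_conv_radius_def Zf_def
  proof (rule conv_radius_geI_ex')
    fix r :: real assume "0 < r" "ereal r < conv_radius Xs"
    then have s: "summable (\<lambda>n. norm (Xs n) * r ^ n)" using sn[of r] by simp
    show "summable (\<lambda>n. fps_nth (Abs_fps (\<lambda>n. Xs n $ i)) n * of_real r ^ n)"
      by (rule summable_comparison_test[OF _ s])
         (use \<open>0 < r\<close> in \<open>auto simp: abs_mult intro!: mult_right_mono component_le_norm_cart\<close>)
  qed
  have ev0: "eventually (\<lambda>t. ereal \<bar>t\<bar> < conv_radius Xs) (nhds (0::real))"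
  proof -
    have "eventually (\<lambda>z. z \<in> eball 0 (conv_radius Xs)) (nhds (0::real))"
      using R by (intro eventually_nhds_in_open) (auto simp: zero_ereal_def)
    then show ?thesis by (rule eventually_mono) simp
  qed
  have expZf: "(\<lambda>t. Xt t $ i) has_fps_expansion Zf i" for i
    unfolding has_fps_expansion_def
  proof
    show "0 < fps_conv_radius (Zf i)" using R Zf_rad[of i] by order
    show "\<forall>\<^sub>F z in nhds 0. eval_fps (Zf i) z = Xt z $ i"
    proof (rule eventually_mono[OF ev0])
      fix t :: real assume t: "ereal \<bar>t\<bar> < conv_radius Xs"
      have "Xt t $ i = (\<Sum>n. (t ^ n *\<^sub>R Xs n) $ i)"
        unfolding Xt_def by (rule bounded_linear.suminf[OF bounded_linear_vec_nth sv[OF t]])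
      then show "eval_fps (Zf i) t = Xt t $ i"
        by (simp add: eval_fps_def Zf_def mult.commute)
    qed
  qed
  have Zeq: "Z i = Zf i - fps_const (X0 $ i)" for i
    by (rule fps_ext) (simp add: Z_def Zf_def X00)
  have expZ: "(\<lambda>t. Xt t $ i - X0 $ i) has_fps_expansion Z i" for i
    unfolding Zeq by (intro has_fps_expansion_diff expZf has_fps_expansion_const)
  have expF: "(\<lambda>t. (\<Sum>i\<in>UNIV. cm \<alpha> \<beta> X0 k i * (Xt t $ i - X0 $ i)) +
       (\<Sum>i\<in>UNIV. \<Sum>j\<in>UNIV. \<alpha> k i j * (Xt t $ i - X0 $ i) * (Xt t $ j - X0 $ j)))
       has_fps_expansion ?F"
    unfolding Cf_def Bf_def Z_def[symmetric]
    by (intro has_fps_expansion_add has_fps_expansion_sum has_fps_expansion_mult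
          has_fps_expansion_cmult_left expZ)
  have "eventually (\<lambda>t. \<bar>t\<bar> < \<epsilon>) (nhds (0::real))"
    unfolding eventually_nhds_metric using eps by (auto simp: dist_real_def)
  then have "eventually (\<lambda>t. (\<Sum>i\<in>UNIV. cm \<alpha> \<beta> X0 k i * (Xt t $ i - X0 $ i)) +
       (\<Sum>i\<in>UNIV. \<Sum>j\<in>UNIV. \<alpha> k i j * (Xt t $ i - X0 $ i) * (Xt t $ j - X0 $ j)) = 0) (nhds 0)"
  proof (rule eventually_mono)
    fix t :: real assume "\<bar>t\<bar> < \<epsilon>"
    then have "quadF \<alpha> \<beta> \<gamma> (X0 + (Xt t - X0)) $ k = 0" using zero by simp
    then show "(\<Sum>i\<in>UNIV. cm \<alpha> \<beta> X0 k i * (Xt t $ i - X0 $ i)) +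
       (\<Sum>i\<in>UNIV. \<Sum>j\<in>UNIV. \<alpha> k i j * (Xt t $ i - X0 $ i) * (Xt t $ j - X0 $ j)) = 0"
      unfolding quadF_shift by (simp add: root linC_expand bilinB_def)
  qed
  with expF have "eventually (\<lambda>t. eval_fps ?F t = 0) (nhds 0)"
    unfolding has_fps_expansion_def by (auto elim: eventually_elim2)
  then show ?thesis using expF fps_zero_near0 unfolding has_fps_expansion_def by blast
qed



lemma sum_trim:
  fixes f :: "nat \<Rightarrow> 'a::comm_monoid_add"
  assumes "f 0 = 0" "f s = 0"
  shows "(\<Sum>j=0..s. f j) = (\<Sum>j=1..s-1. f j)"
proof (cases "s = 0")
  case True thus ?thesis using assms by simp
next
  case False
  show ?thesis
  proof (rule sum.mono_neutral_right)
    show "\<forall>i\<in>{0..s} - {1..s-1}. f i = 0"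
    proof
      fix i assume "i \<in> {0..s} - {1..s-1}"
      then have "i = 0 \<or> i = s" using False by auto
      then show "f i = 0" using assms by auto
    qed
  qed auto
qed

lemma linC_0[simp]: "linC \<alpha> \<beta> X0 0 = 0"
  by (simp add: vec_eq_iff linC_expand)

lemma step:
  fixes \<alpha> :: "'n::finite \<Rightarrow> 'm::finite \<Rightarrow> 'm \<Rightarrow> real" and \<phi> :: "real fps" and q :: nat
  assumes Tker: "T \<inter> {X. linC \<alpha> \<beta> X0 X = 0} = {0}"
    and Zeq: "\<And>k. Cf (cm \<alpha> \<beta> X0) Z k + Bf \<alpha> Z Z k = 0"
    and Z1: "vb Z 1"
    and phiT: "\<And>n. cfv Z n - fps_nth \<phi> n *\<^sub>R v \<in> T"
    and phinz: "\<phi> \<noteq> 0" and phi0: "fps_nth \<phi> 0 = 0"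
    and Tsub: "subspace T"
    and Y1: "Y 1 = v"
    and rec: "\<And>p. 1 \<le> p \<Longrightarrow> p < q \<Longrightarrow> linC \<alpha> \<beta> X0 (Y p) = - (\<Sum>l=1..p-1. bilinB \<alpha> (Y l) (Y (p-l)))"
    and YT: "\<And>p. 2 \<le> p \<Longrightarrow> p < q \<Longrightarrow> Y p \<in> T"
    and q: "q \<ge> 2"
  shows "(\<Sum>l=1..q-1. bilinB \<alpha> (Y l) (Y (q-l))) \<in> range (linC \<alpha> \<beta> X0)"
proof -
  define c where "c = cm \<alpha> \<beta> X0"
  define R where "R = (\<Sum>l=1..q-1. bilinB \<alpha> (Y l) (Y (q-l)))"
  define P where "P = (\<lambda>i. \<Sum>p=1..q-1. fps_const (vec_nth (Y p) i) * fps_X ^ (p::nat))"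
  define \<Phi> where "\<Phi> = (\<lambda>k. Cf c P k + Bf \<alpha> P P k)"
  have cfvP: "cfv P s = (if 1 \<le> s \<and> s < q then Y s else 0)" for s
    using q by (auto simp: P_def cfv_def fps_sum_nth vec_eq_iff mult_delta_right sum.delta)
  have Phi_nth: "fps_nth (\<Phi> k) s = linC \<alpha> \<beta> X0 (cfv P s) $ k + (\<Sum>l=0..s. bilinB \<alpha> (cfv P l) (cfv P (s-l)) $ k)" for k s
    by (simp add: \<Phi>_def c_def Cf_nth Bf_nth)
  have trim: "(\<Sum>l=0..s. bilinB \<alpha> (cfv P l) (cfv P (s-l)) $ k) = (\<Sum>l=1..s-1. bilinB \<alpha> (Y l) (Y (s-l)) $ k)"
    if "s \<le> q" for s k
  proof -
    have "(\<Sum>l=0..s. bilinB \<alpha> (cfv P l) (cfv P (s-l)) $ k) = (\<Sum>l=1..s-1. bilinB \<alpha> (cfv P l) (cfv P (s-l)) $ k)"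
      by (rule sum_trim) (simp_all add: cfvP)
    also have "\<dots> = (\<Sum>l=1..s-1. bilinB \<alpha> (Y l) (Y (s-l)) $ k)"
      by (rule sum.cong) (use that in \<open>auto simp: cfvP\<close>)
    finally show ?thesis .
  qed
  have Phi_low: "fps_nth (\<Phi> k) s = 0" if "s < q" for k s
  proof (cases "s = 0")
    case True then show ?thesis by (simp add: Phi_nth cfvP)
  next
    case False
    then have "linC \<alpha> \<beta> X0 (cfv P s) $ k = - (\<Sum>l=1..s-1. bilinB \<alpha> (Y l) (Y (s-l)) $ k)"
      using that rec[of s] by (simp add: cfvP)
    then show ?thesis using that by (simp add: Phi_nth trim)
  qed
  have Phi_q: "fps_nth (\<Phi> k) q = R $ k" for k
  proof -
    have "fps_nth (\<Phi> k) q = linC \<alpha> \<beta> X0 (cfv P q) $ k + (\<Sum>l=1..q-1. bilinB \<alpha> (Y l) (Y (q-l)) $ k)"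
      by (simp only: Phi_nth trim[OF order.refl])
    then show ?thesis by (simp add: cfvP R_def)
  qed
  define H where "H = (\<lambda>k. fps_shift q (\<Phi> k))"
  have PhiH: "\<Phi> k = fps_X ^ q * H k" for k
    by (rule fps_ext) (simp add: fps_X_power_mult_nth H_def Phi_low)
  define G where "G = (\<lambda>i. P i oo \<phi>)"
  have GPhi: "Cf c G k + Bf \<alpha> G G k = \<phi> ^ q * (H k oo \<phi>)" for k
  proof -
    have "\<Phi> k oo \<phi> = Cf c G k + Bf \<alpha> G G k"
      by (simp add: \<Phi>_def Cf_def Bf_def G_def fps_compose_sum_distrib fps_compose_add_distrib
          fps_compose_mult_distrib[OF phi0])
    moreover have "\<Phi> k oo \<phi> = \<phi> ^ q * (H k oo \<phi>)"
      by (simp add: PhiH fps_compose_mult_distrib[OF phi0] fps_X_power_compose[OF phi0])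
    ultimately show ?thesis by simp
  qed
  have Gi: "G i = (\<Sum>p=1..q-1. fps_const (vec_nth (Y p) i) * \<phi> ^ (p::nat))" for i
    by (simp add: G_def P_def fps_compose_sum_distrib fps_compose_mult_distrib[OF phi0]
        fps_X_power_compose[OF phi0])
  have cfvG: "cfv G n = (\<Sum>p=1..q-1. fps_nth (\<phi> ^ p) n *\<^sub>R Y p)" for n
    by (simp add: cfv_def vec_eq_iff Gi fps_sum_nth mult.commute)
  define E where "E = (\<lambda>i. Z i - G i)"
  have ZGE: "Z = (\<lambda>i. G i + E i)" by (simp add: E_def)
  have eq: "Cf c E k + Bf \<alpha> G E k + Bf \<alpha> E G k + Bf \<alpha> E E k + \<phi> ^ q * (H k oo \<phi>) = 0" for k
  proof -
    have "Cf c (\<lambda>i. G i + E i) k + Bf \<alpha> (\<lambda>i. G i + E i) (\<lambda>i. G i + E i) k = 0"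
      using Zeq[of k] unfolding c_def[symmetric] ZGE[symmetric] .
    then show ?thesis unfolding Cf_add Bf_add GPhi[symmetric] by (simp add: algebra_simps)
  qed
  have G1: "vb G 1"
    by (simp add: vb_def G_def P_def fps_sum_nth)
  have E1: "vb E 1"
    using Z1 G1 by (simp add: vb_def E_def)
  have ET: "cfv E n \<in> T" for n
  proof -
    have "cfv G n = fps_nth \<phi> n *\<^sub>R v + (\<Sum>p=2..q-1. fps_nth (\<phi> ^ p) n *\<^sub>R Y p)"
    proof -
      have s: "(\<Sum>p=1..q-1. f p) = f 1 + (\<Sum>p=2..q-1. f p)" for f :: "nat \<Rightarrow> real^'m"
        using q by (simp add: sum.atLeast_Suc_atMost numeral_2_eq_2)
      have Y1': "Y (Suc 0) = v" using Y1 by simp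
      show ?thesis unfolding cfvG s by (simp add: Y1 Y1')
    qed
    then have "cfv E n = (cfv Z n - fps_nth \<phi> n *\<^sub>R v) - (\<Sum>p=2..q-1. fps_nth (\<phi> ^ p) n *\<^sub>R Y p)"
      by (simp add: E_def cfv_def vec_eq_iff algebra_simps)
    also have "\<dots> \<in> T"
      by (intro subspace_diff[OF Tsub] phiT subspace_sum[OF Tsub] subspace_scale[OF Tsub] YT) auto
    finally show ?thesis .
  qed
  define N where "N = subdegree (\<phi> ^ q)"
  have phq: "\<phi> ^ q \<noteq> 0" using phinz by simp
  have sd: "subdegree \<phi> \<ge> 1"
  proof (rule ccontr)
    assume "\<not> subdegree \<phi> \<ge> 1"
    then have "subdegree \<phi> = 0" by simp
    then show False using phinz phi0 nth_subdegree_nonzero[of \<phi>] by simp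
  qed
  have N1: "N \<ge> 1" using sd q by (simp add: N_def)
  have PsiN: "vb (\<lambda>k. \<phi> ^ q * (H k oo \<phi>)) N"
    unfolding vb_def
  proof (intro allI impI)
    fix k n assume nN: "n < N"
    have z: "fps_nth (\<phi> ^ q) i = 0" if "i \<le> n" for i
    proof -
      have "i < subdegree (\<phi> ^ q)" using that nN unfolding N_def by linarith
      then show ?thesis by (rule nth_less_subdegree_zero)
    qed
    show "fps_nth (\<phi> ^ q * (H k oo \<phi>)) n = 0"
      unfolding fps_mult_nth by (rule sum.neutral) (simp add: z)
  qed
  have EN: "vb E N"
    by (rule order_lemma[OF Tker _ G1 E1 PsiN ET]) (use eq in \<open>simp add: c_def\<close>)
  define a where "a = fps_nth (\<phi> ^ q) N"
  have a0: "a \<noteq> 0" using phq by (simp add: a_def N_def)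
  have lin: "linC \<alpha> \<beta> X0 (cfv E N) $ k = - (a * R $ k)" for k
  proof -
    have "fps_nth (Cf c E k + Bf \<alpha> G E k + Bf \<alpha> E G k + Bf \<alpha> E E k + \<phi> ^ q * (H k oo \<phi>)) N = 0"
      using eq[of k] by simp
    moreover have "fps_nth (Bf \<alpha> G E k) N = 0" using vb_Bf[where \<alpha>=\<alpha>, OF G1 EN] by (simp add: vb_def)
    moreover have "fps_nth (Bf \<alpha> E G k) N = 0" using vb_Bf[where \<alpha>=\<alpha>, OF EN G1] by (simp add: vb_def)
    moreover have "fps_nth (Bf \<alpha> E E k) N = 0" using vb_Bf[where \<alpha>=\<alpha>, OF EN EN] N1 by (simp add: vb_def)
    moreover have "fps_nth (\<phi> ^ q * (H k oo \<phi>)) N = a * R $ k"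
      unfolding N_def a_def nth_subdegree_mult_left by (simp add: H_def Phi_q)
    ultimately show ?thesis by (simp add: c_def Cf_nth)
  qed
  have "linC \<alpha> \<beta> X0 ((- 1 / a) *\<^sub>R cfv E N) = (- 1 / a) *\<^sub>R linC \<alpha> \<beta> X0 (cfv E N)"
    by (rule linC_scale)
  also have "\<dots> = R" using a0 by (simp add: vec_eq_iff lin)
  finally have "R = linC \<alpha> \<beta> X0 ((- 1 / a) *\<^sub>R cfv E N)" by simp
  then show ?thesis unfolding R_def by blast
qed



primrec hist :: "(nat \<Rightarrow> 'a list \<Rightarrow> 'a) \<Rightarrow> nat \<Rightarrow> 'a list" where
  "hist f 0 = []"
| "hist f (Suc n) = hist f n @ [f n (hist f n)]"

lemma length_hist[simp]: "length (hist f n) = n"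
  by (induction n) auto

lemma hist_nth: "p < n \<Longrightarrow> hist f n ! p = f p (hist f p)"
  by (induction n) (auto simp: nth_append less_Suc_eq)

theorem theorem6:
  fixes \<alpha> :: "'n::finite \<Rightarrow> 'm::finite \<Rightarrow> 'm \<Rightarrow> real"
    and \<beta> :: "'n \<Rightarrow> 'm \<Rightarrow> real" and \<gamma> :: "'n \<Rightarrow> real"
    and X0 :: "real^'m" and T :: "(real^'m) set" and Xs :: "nat \<Rightarrow> real^'m"
  assumes sym: "\<And>k i j. \<alpha> k i j = \<alpha> k j i"
    and root: "quadF \<alpha> \<beta> \<gamma> X0 = 0"
    and ker1: "dim {X. linC \<alpha> \<beta> X0 X = 0} = 1"
    and Tsub: "subspace T" and Tcodim: "dim T = CARD('m) - 1"
    and Tker: "T \<inter> {X. linC \<alpha> \<beta> X0 X = 0} = {0}"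
    and fam: "analytic_family \<alpha> \<beta> \<gamma> X0 Xs"
    and noncst: "nonconstant_series Xs"
  shows "\<exists>Ys. T_standard_formal_solution \<alpha> \<beta> X0 T Ys \<and> Ys 0 = X0"
proof -
  define K where "K = {X. linC \<alpha> \<beta> X0 X = 0}"
  have subK: "subspace K"
    unfolding K_def subspace_def by (simp add: linC_add linC_scale)
  obtain B where B: "0 \<notin> B" "B \<subseteq> K" "card B = dim K"
    using orthogonal_basis_subspace[OF subK] by blast
  have "card B = 1" using B(3) ker1 K_def by simp
  then obtain v where Bv: "B = {v}" by (rule card_1_singletonE)
  have v0: "v \<noteq> 0" and vK: "linC \<alpha> \<beta> X0 v = 0" using B Bv K_def by auto
  have vT: "v \<notin> T" using Tker v0 vK by blast
  have spanT: "span T = T" using Tsub by simp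
  have "dim (insert v T) = CARD('m)"
  proof -
    have "v \<notin> span T" unfolding spanT by (rule vT)
    then have "dim (insert v T) = dim T + 1" by (simp add: dim_insert)
    moreover have "CARD('m) > 0" by simp
    ultimately show ?thesis using Tcodim by simp
  qed
  then have "span (insert v T) = UNIV" using dim_eq_full[of "insert v T"] by simp
  then have dec: "\<exists>c. X - c *\<^sub>R v \<in> T" for X
    using spanT by (auto simp: span_insert)
  have uniq: "c = d" if "X - c *\<^sub>R v \<in> T" "X - d *\<^sub>R v \<in> T" for X c d
  proof (rule ccontr)
    assume cd: "c \<noteq> d"
    have "(X - c *\<^sub>R v) - (X - d *\<^sub>R v) \<in> T" by (rule subspace_diff[OF Tsub that])
    then have "(d - c) *\<^sub>R v \<in> T" by (simp add: algebra_simps)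
    then have "(1 / (d - c)) *\<^sub>R ((d - c) *\<^sub>R v) \<in> T" by (rule subspace_scale[OF Tsub])
    then show False using cd vT by simp
  qed
  define pr where "pr X = (SOME c. X - c *\<^sub>R v \<in> T)" for X
  have prT: "X - pr X *\<^sub>R v \<in> T" for X
    unfolding pr_def using dec[of X] by (rule someI_ex)
  define Z where "Z = (\<lambda>i. Abs_fps (\<lambda>n. if n = 0 then 0 else Xs n $ i))"
  have Zeq: "Cf (cm \<alpha> \<beta> X0) Z k + Bf \<alpha> Z Z k = 0" for k
    unfolding Z_def by (rule analytic_to_formal[OF root fam])
  have Z1: "vb Z 1" by (simp add: vb_def Z_def)
  have cfvZ: "cfv Z n = (if n = 0 then 0 else Xs n)" for n
    by (simp add: cfv_def Z_def vec_eq_iff)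
  define \<phi> where "\<phi> = Abs_fps (\<lambda>n. pr (cfv Z n))"
  have phiT: "cfv Z n - fps_nth \<phi> n *\<^sub>R v \<in> T" for n
    by (simp add: \<phi>_def prT)
  have phi0: "fps_nth \<phi> 0 = 0"
  proof -
    have "0 - 0 *\<^sub>R v \<in> T" using subspace_0[OF Tsub] by simp
    moreover have "0 - pr 0 *\<^sub>R v \<in> T" by (rule prT)
    ultimately have "pr 0 = 0" using uniq by metis
    then show ?thesis by (simp add: \<phi>_def cfvZ)
  qed
  have phinz: "\<phi> \<noteq> 0"
  proof
    assume ph: "\<phi> = 0"
    have ZT: "cfv Z n \<in> T" for n using phiT[of n] ph by simp
    have "vb Z (Suc n)" for n
      by (rule order_lemma[OF Tker _ _ Z1 _ ZT, where G = "\<lambda>i. 0" and \<Psi> = "\<lambda>k. 0"])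
         (use Zeq in \<open>auto simp: vb_def\<close>)
    then have "cfv Z n = 0" for n using vb_cfv by blast
    then have "Xs n = 0" if "n \<ge> 1" for n using cfvZ[of n] that by simp
    then show False using noncst unfolding nonconstant_series_def by blast
  qed
  define f where "f = (\<lambda>q (xs :: (real^'m) list). if q = 0 then X0 else if q = 1 then v else
     (SOME w. w \<in> T \<and> linC \<alpha> \<beta> X0 w = - (\<Sum>l=1..q-1. bilinB \<alpha> (xs ! l) (xs ! (q - l)))))"
  define Ys where "Ys q = f q (hist f q)" for q
  have Ys0: "Ys 0 = X0" by (simp add: Ys_def f_def)
  have Ys1: "Ys 1 = v" by (simp add: Ys_def f_def)
  have Ysq: "Ys q = (SOME w. w \<in> T \<and> linC \<alpha> \<beta> X0 w = - (\<Sum>l=1..q-1. bilinB \<alpha> (Ys l) (Ys (q - l))))"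
    if "q \<ge> 2" for q
  proof -
    have "(\<Sum>l=1..q-1. bilinB \<alpha> (hist f q ! l) (hist f q ! (q - l))) = (\<Sum>l=1..q-1. bilinB \<alpha> (Ys l) (Ys (q - l)))"
      by (rule sum.cong) (auto simp: Ys_def hist_nth)
    then show ?thesis using that by (simp add: Ys_def[of q] f_def)
  qed
  have main: "(1 \<le> q \<longrightarrow> linC \<alpha> \<beta> X0 (Ys q) = - (\<Sum>l=1..q-1. bilinB \<alpha> (Ys l) (Ys (q - l))))
      \<and> (2 \<le> q \<longrightarrow> Ys q \<in> T)" for q
  proof (induction q rule: less_induct)
    case (less q)
    show ?case
    proof (cases "q \<ge> 2")
      case False
      then have "q = 0 \<or> q = 1" by auto
      then show ?thesis using Ys1 vK by auto
    next
      case True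
      have "(\<Sum>l=1..q-1. bilinB \<alpha> (Ys l) (Ys (q-l))) \<in> range (linC \<alpha> \<beta> X0)"
        by (rule step[where Y=Ys and q=q, OF Tker Zeq Z1 phiT phinz phi0 Tsub Ys1 _ _ True]) (use less in auto)
      then obtain X where X: "(\<Sum>l=1..q-1. bilinB \<alpha> (Ys l) (Ys (q-l))) = linC \<alpha> \<beta> X0 X" by auto
      define w where "w = - (X - pr X *\<^sub>R v)"
      have "w \<in> T" unfolding w_def by (rule subspace_neg[OF Tsub prT])
      moreover have "linC \<alpha> \<beta> X0 w = - (\<Sum>l=1..q-1. bilinB \<alpha> (Ys l) (Ys (q-l)))"
      proof -
        have "w = pr X *\<^sub>R v + (-1) *\<^sub>R X" unfolding w_def by simp
        then have "linC \<alpha> \<beta> X0 w = pr X *\<^sub>R linC \<alpha> \<beta> X0 v + (-1) *\<^sub>R linC \<alpha> \<beta> X0 X"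
          by (simp only: linC_add linC_scale)
        then show ?thesis using X vK by simp
      qed
      ultimately have "\<exists>w. w \<in> T \<and> linC \<alpha> \<beta> X0 w = - (\<Sum>l=1..q-1. bilinB \<alpha> (Ys l) (Ys (q-l)))" by blast
      then have "Ys q \<in> T \<and> linC \<alpha> \<beta> X0 (Ys q) = - (\<Sum>l=1..q-1. bilinB \<alpha> (Ys l) (Ys (q-l)))"
        unfolding Ysq[OF True] by (rule someI_ex)
      then show ?thesis by simp
    qed
  qed
  have "T_standard_formal_solution \<alpha> \<beta> X0 T Ys"
    unfolding T_standard_formal_solution_def using main Ys1 v0 by auto
  then show ?thesis using Ys0 by blast
qed

end
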